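(* Let $p\geq 1$ be an integer, $H$ a connected graph with at least $2p$ vertices, and $T$ a complete rooted ternary tree with at least $p$ vertices. Let $V\subseteq V(T(H))$ with $OC(T,V)=V(T)$ and let $SV$ be an ordering of $V$. Then $T(H)$ has a witnessing matching $M$ for $SV$ of size at least $p\,(tr(|V(T)|)-tr(p))$. Moreover, $M$ is supported by a partition of $SV$ into a prefix $SV_1$ and a suffix $SV_2$ such that $|V(T(H))|-|SV_i|\geq p^2$ for each $i\in\{1,2\}$.
   Context: Complete rooted ternary tree of height $h$: rooted tree, every root-leaf path has exactly $h$ edges, every non-leaf vertex has exactly 3 children. For real $x\geq1$, $tr(x)$ is the largest integer $h\geq0$ such that a complete rooted ternary tree of height $h$ has at most $x$ vertices. Graph $T(H)$: for $V(H)=\{1,\dots,m\}$, vertices $v^i$ ($v\in V(T)$, $1\le i\le m$); for each $v$, $v^1,\dots,v^m$ span a copy $H^v$ of $H$; and $u^iv^i$ is an edge for each $i$ whenever $uv\in E(T)$. $OC(T,V)=\{u\in V(T): V(H^u)\cap V\neq\emptyset\}$. For a graph $G$, $V\subseteq V(G)$ and an ordering $SV$ of $V$: a partition of $SV$ into a prefix $SV_1$ and a suffix $SV_2$ supports an edge $\{u,v\}$ if one endpoint is in $SV_1$ and the other in $SV_2$, or one endpoint is in $V$ and the other in $V(G)\setminus V$; a matching is supported by the partition if all its edges are, and it is witnessing for $SV$ if it is supported by some such prefix/suffix partition. *)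

theory Defs
  imports Main "HOL.Real"
begin

definition simple_graph :: "'a set \<Rightarrow> 'a set set \<Rightarrow> bool" where
  "simple_graph V E \<longleftrightarrow> finite V \<and>
     (\<forall>e\<in>E. \<exists>u v. u \<noteq> v \<and> u \<in> V \<and> v \<in> V \<and> e = {u, v})"

definition connected_graph :: "'a set \<Rightarrow> 'a set set \<Rightarrow> bool" where
  "connected_graph V E \<longleftrightarrow> simple_graph V E \<and> V \<noteq> {} \<and>
     (\<forall>u\<in>V. \<forall>v\<in>V. (u, v) \<in> {(x, y). {x, y} \<in> E}\<^sup>*)"

definition matching :: "'a set set \<Rightarrow> 'a set set \<Rightarrow> bool" where
  "matching E M \<longleftrightarrow> M \<subseteq> E \<and> (\<forall>e\<in>M. \<forall>e'\<in>M. e \<noteq> e' \<longrightarrow> e \<inter> e' = {})"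

text \<open>Canonical complete rooted ternary tree of height h: vertices are words over
  {0,1,2} of length at most h, root is the empty word, the children of w (length < h)
  are w@[0], w@[1], w@[2].\<close>

definition ctt_verts :: "nat \<Rightarrow> nat list set" where
  "ctt_verts h = {xs. length xs \<le> h \<and> set xs \<subseteq> {0, 1, 2}}"

definition ctt_edges :: "nat \<Rightarrow> nat list set set" where
  "ctt_edges h = {{xs, xs @ [i]} | xs i. xs \<in> ctt_verts h \<and> length xs < h \<and> i < 3}"

definition complete_ternary_tree :: "'b set \<Rightarrow> 'b set set \<Rightarrow> bool" where
  "complete_ternary_tree VT ET \<longleftrightarrow> simple_graph VT ET \<and>
     (\<exists>h f. bij_betw f VT (ctt_verts h) \<and>
        (\<forall>u\<in>VT. \<forall>v\<in>VT. {u, v} \<in> ET \<longleftrightarrow> {f u, f v} \<in> ctt_edges h))"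

definition tr :: "real \<Rightarrow> nat" where
  "tr x = (GREATEST h. real (card (ctt_verts h)) \<le> x)"

definition TH_verts :: "'b set \<Rightarrow> nat \<Rightarrow> ('b \<times> nat) set" where
  "TH_verts VT m = VT \<times> {1..m}"

definition TH_edges :: "'b set \<Rightarrow> 'b set set \<Rightarrow> nat set set \<Rightarrow> nat \<Rightarrow> ('b \<times> nat) set set" where
  "TH_edges VT ET EH m =
     {{(v, i), (v, j)} | v i j. v \<in> VT \<and> {i, j} \<in> EH}
     \<union> {{(u, i), (v, i)} | u v i. {u, v} \<in> ET \<and> i \<in> {1..m}}"

definition OC :: "'b set \<Rightarrow> ('b \<times> nat) set \<Rightarrow> 'b set" where
  "OC VT V = {u \<in> VT. V \<inter> ({u} \<times> UNIV) \<noteq> {}}"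

definition is_ordering :: "'a list \<Rightarrow> 'a set \<Rightarrow> bool" where
  "is_ordering SV V \<longleftrightarrow> distinct SV \<and> set SV = V"

definition supports :: "'a set \<Rightarrow> 'a set \<Rightarrow> 'a list \<Rightarrow> 'a list \<Rightarrow> 'a set \<Rightarrow> bool" where
  "supports VG V SV1 SV2 e \<longleftrightarrow> (\<exists>x y. e = {x, y} \<and>
     ((x \<in> set SV1 \<and> y \<in> set SV2) \<or> (x \<in> V \<and> y \<in> VG - V)))"

definition supported_by :: "'a set \<Rightarrow> 'a set \<Rightarrow> 'a list \<Rightarrow> 'a list \<Rightarrow> 'a set set \<Rightarrow> bool" where
  "supported_by VG V SV1 SV2 M \<longleftrightarrow> (\<forall>e\<in>M. supports VG V SV1 SV2 e)"

definition witnessing :: "'a set \<Rightarrow> 'a set set \<Rightarrow> 'a set \<Rightarrow> 'a list \<Rightarrow> 'a set set \<Rightarrow> bool" where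
  "witnessing VG EG V SV M \<longleftrightarrow> matching EG M \<and>
     (\<exists>k\<le>length SV. supported_by VG V (take k SV) (drop k SV) M)"

end

theory Submission
  imports Defs
begin


lemma rtrancl_diff:
  assumes "(x,y) \<in> R\<^sup>*" "c x \<noteq> c y" shows "\<exists>a b. (a,b) \<in> R \<and> c a \<noteq> c b"
  using assms by (induction rule: rtrancl_induct) (simp, metis)

lemma ctt_finite: "finite (ctt_verts j)"
proof -
  have "ctt_verts j = {xs. set xs \<subseteq> {0,1,2} \<and> length xs \<le> j}" unfolding ctt_verts_def by auto
  then show ?thesis using finite_lists_length_le[of "{0,1,2::nat}" j] by simp
qed

lemma ctt_0: "ctt_verts 0 = {[]}" unfolding ctt_verts_def by auto

definition NN :: "nat \<Rightarrow> nat" where "NN j = card (ctt_verts j)"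

lemma NN_0: "NN 0 = 1" unfolding NN_def ctt_0 by simp

lemma NN_Suc: "NN j < NN (Suc j)"
proof -
  have "ctt_verts j \<subset> ctt_verts (Suc j)"
  proof
    show "ctt_verts j \<subseteq> ctt_verts (Suc j)" unfolding ctt_verts_def by auto
    have "replicate (Suc j) 0 \<in> ctt_verts (Suc j)" "replicate (Suc j) 0 \<notin> ctt_verts j"
      unfolding ctt_verts_def by auto
    then show "ctt_verts j \<noteq> ctt_verts (Suc j)" by blast
  qed
  then show ?thesis unfolding NN_def using ctt_finite psubset_card_mono by blast
qed

lemma NN_smono: "strict_mono NN"
  using NN_Suc strict_mono_Suc_iff by blast

lemma NN_less_iff: "NN i < NN j \<longleftrightarrow> i < j"
  using NN_smono strict_mono_less by blast

lemma NN_le_iff: "NN i \<le> NN j \<longleftrightarrow> i \<le> j"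
  using NN_smono strict_mono_less_eq by blast

lemma NN_ge: "NN j \<ge> j + 1"
proof (induction j)
  case 0 then show ?case by (simp add: NN_0)
next
  case (Suc j) then show ?case using NN_Suc[of j] by simp
qed

lemma tr_eq:
  assumes "NN t \<le> x" "x < NN (Suc t)"
  shows "tr (real x) = t"
proof -
  have "(GREATEST h. real (NN h) \<le> real x) = t"
  proof (rule Greatest_equality)
    show "real (NN t) \<le> real x" using assms by simp
    fix y assume "real (NN y) \<le> real x"
    then have "NN y < NN (Suc t)" using assms by simp
    then show "y \<le> t" using NN_less_iff by simp
  qed
  then show ?thesis unfolding tr_def NN_def by simp
qed

lemma tr_exists:
  assumes "x \<ge> 1" shows "\<exists>t. NN t \<le> x \<and> x < NN (Suc t)"
proof -
  define t where "t = (GREATEST t. NN t \<le> x)"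
  have ex: "NN 0 \<le> x" using assms NN_0 by simp
  have bd: "\<forall>y. NN y \<le> x \<longrightarrow> y \<le> x" using NN_ge by (metis add_leD1 le_trans)
  have "NN t \<le> x" unfolding t_def by (rule GreatestI_nat[where P="\<lambda>t. NN t \<le> x", OF ex]) (use bd in auto)
  moreover have "\<not> NN (Suc t) \<le> x"
  proof
    assume "NN (Suc t) \<le> x"
    then have "Suc t \<le> t" unfolding t_def by (rule Greatest_le_nat[where P="\<lambda>t. NN t \<le> x"]) (use bd in auto)
    then show False by simp
  qed
  ultimately show ?thesis by auto
qed

definition sub :: "nat list \<Rightarrow> nat \<Rightarrow> nat list set" where
  "sub w j = (\<lambda>z. w @ z) ` ctt_verts j"

lemma card_sub: "card (sub w j) = NN j"
  unfolding sub_def NN_def by (rule card_image) (auto simp: inj_on_def)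

lemma sub_finite: "finite (sub w j)" unfolding sub_def using ctt_finite by simp

lemma sub_ctt: "length w + j \<le> h \<Longrightarrow> set w \<subseteq> {0,1,2} \<Longrightarrow> sub w j \<subseteq> ctt_verts h"
  unfolding sub_def ctt_verts_def by auto

lemma sub_child: "c < 3 \<Longrightarrow> sub (w @ [c]) j \<subseteq> sub w (Suc j)"
  unfolding sub_def ctt_verts_def by (auto intro!: image_eqI[where x="c # _"])

lemma sub_root: "w \<in> sub w j" unfolding sub_def ctt_verts_def by (auto intro!: image_eqI[where x="[]"])

lemma sub_disj: "a \<noteq> b \<Longrightarrow> sub (w @ [a]) j \<inter> sub (w @ [b]) j = {}"
  unfolding sub_def by auto

lemma sub_root_notin: "w \<notin> sub (w @ [a]) j"
  unfolding sub_def by auto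

lemma three_order:
  fixes K :: "nat \<Rightarrow> nat"
  shows "\<exists>a b c. a < 3 \<and> b < 3 \<and> c < 3 \<and> a \<noteq> b \<and> a \<noteq> c \<and> b \<noteq> c \<and> K a \<le> K b \<and> K b \<le> K c"
proof (cases "K 0 \<le> K 1")
  case True
  then show ?thesis
  proof (cases "K 1 \<le> K 2")
    case True with \<open>K 0 \<le> K 1\<close> show ?thesis by (rule_tac x=0 in exI, rule_tac x=1 in exI, rule_tac x=2 in exI) simp
  next
    case False
    show ?thesis
    proof (cases "K 0 \<le> K 2")
      case True with False \<open>K 0 \<le> K 1\<close> show ?thesis by (rule_tac x=0 in exI, rule_tac x=2 in exI, rule_tac x=1 in exI) simp
    next
      case F2: False with False \<open>K 0 \<le> K 1\<close> show ?thesis by (rule_tac x=2 in exI, rule_tac x=0 in exI, rule_tac x=1 in exI) simp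
    qed
  qed
next
  case False
  then show ?thesis
  proof (cases "K 0 \<le> K 2")
    case True with False show ?thesis by (rule_tac x=1 in exI, rule_tac x=0 in exI, rule_tac x=2 in exI) simp
  next
    case F2: False
    show ?thesis
    proof (cases "K 1 \<le> K 2")
      case True with False F2 show ?thesis by (rule_tac x=1 in exI, rule_tac x=2 in exI, rule_tac x=0 in exI) simp
    next
      case F3: False with False F2 show ?thesis by (rule_tac x=2 in exI, rule_tac x=1 in exI, rule_tac x=0 in exI) simp
    qed
  qed
qed




locale LT =
  fixes p m :: nat and EH :: "nat set set" and VT :: "'b set" and ET :: "'b set set"
    and V :: "('b \<times> nat) set" and SV :: "('b \<times> nat) list" and h :: nat
    and g :: "nat list \<Rightarrow> 'b"
  assumes p1: "p \<ge> 1" and Hconn: "connected_graph {1..m} EH" and m2p: "m \<ge> 2*p"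
    and gbij: "bij_betw g (ctt_verts h) VT"
    and gedge: "\<And>x c. x \<in> ctt_verts h \<Longrightarrow> length x < h \<Longrightarrow> c < 3 \<Longrightarrow> {g x, g (x@[c])} \<in> ET"
    and Vsub: "V \<subseteq> VT \<times> {1..m}" and OCa: "\<And>u. u \<in> VT \<Longrightarrow> \<exists>i. (u,i) \<in> V"
    and dSV: "distinct SV" and sSV: "set SV = V"
begin

abbreviation "AA k \<equiv> set (take k SV)"
abbreviation "BB k \<equiv> set (drop k SV)"
abbreviation "VG \<equiv> TH_verts VT m"
abbreviation "EG \<equiv> TH_edges VT ET EH m"

definition cp :: "'b \<Rightarrow> ('b \<times> nat) set" where "cp u = {u} \<times> {1..m}"
definition arich where "arich k u \<longleftrightarrow> card (cp u - AA k) < p"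
definition brich where "brich k u \<longleftrightarrow> card (cp u - BB k) < p"
definition sA where "sA Q k = card (Q \<times> {1..m} - BB k)"
definition sB where "sB Q k = card (Q \<times> {1..m} - AA k)"
definition cl :: "nat \<Rightarrow> 'b \<times> nat \<Rightarrow> nat" where
  "cl k x = (if x \<in> AA k then 0 else if x \<in> V then 1 else 2)"
definition ES where "ES S = {(a,b). a \<in> S \<and> b \<in> S \<and> {a,b} \<in> ET}"
definition conn where "conn S \<longleftrightarrow> (\<forall>x\<in>S. \<forall>y\<in>S. (x,y) \<in> (ES S)\<^sup>*)"
definition good where "good k Z M \<longleftrightarrow> finite M \<and> matching EG M \<and> \<Union>M \<subseteq> Z
   \<and> supported_by VG V (take k SV) (drop k SV) M"
definition Inv where "Inv Q k \<longleftrightarrow> (\<exists>u\<in>Q. \<not> arich k u) \<and> (\<exists>u\<in>Q. \<not> brich k u)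
   \<and> sA Q k \<ge> p^2 \<and> sB Q k \<ge> p^2"

lemma AB_disj: "AA k \<inter> BB k = {}"
  using set_take_disj_set_drop_if_distinct[OF dSV, of k k] by simp

lemma AB_un: "AA k \<union> BB k = V"
  using sSV by (metis append_take_drop_id set_append)

lemma VT_fin: "finite VT"
  using gbij ctt_finite bij_betw_finite by blast

lemma VG_fin: "finite VG" unfolding TH_verts_def using VT_fin by simp

lemma V_VG: "V \<subseteq> VG" unfolding TH_verts_def using Vsub by simp

lemma card_cp: "card (cp u) = m" unfolding cp_def by (simp add: card_cartesian_product)

lemma cp_fin: "finite (cp u)" unfolding cp_def by simp

lemma cover: "m \<le> card (cp u - AA k) + card (cp u - BB k)"
proof -
  have "cp u \<subseteq> (cp u - AA k) \<union> (cp u - BB k)" using AB_disj by blast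
  then have "card (cp u) \<le> card ((cp u - AA k) \<union> (cp u - BB k))"
    by (intro card_mono) (auto simp: cp_fin)
  also have "\<dots> \<le> card (cp u - AA k) + card (cp u - BB k)" by (rule card_Un_le)
  finally show ?thesis using card_cp by simp
qed

lemma not_both: "\<not> (arich k u \<and> brich k u)"
  using cover[of u k] m2p unfolding arich_def brich_def by linarith

lemma arich_mono: "k \<le> k' \<Longrightarrow> arich k u \<Longrightarrow> arich k' u"
  unfolding arich_def
  by (meson Diff_mono card_mono cp_fin finite_Diff le_less_trans order_refl set_take_subset_set_take)

lemma brich_mono: "k \<le> k' \<Longrightarrow> brich k' u \<Longrightarrow> brich k u"
  unfolding brich_def
  by (meson Diff_mono card_mono cp_fin finite_Diff le_less_trans order_refl set_drop_subset_set_drop)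

lemma sum_lb:
  assumes "finite P" "\<forall>u\<in>P. card (cp u - Y) \<ge> c"
  shows "card (P \<times> {1..m} - Y) \<ge> card P * c"
  using assms
proof (induction P rule: finite_induct)
  case empty then show ?case by simp
next
  case (insert u P)
  have eq: "insert u P \<times> {1..m} - Y = (cp u - Y) \<union> (P \<times> {1..m} - Y)" unfolding cp_def by auto
  have dj: "(cp u - Y) \<inter> (P \<times> {1..m} - Y) = {}" unfolding cp_def using insert.hyps by auto
  have "card (insert u P \<times> {1..m} - Y) = card (cp u - Y) + card (P \<times> {1..m} - Y)"
    unfolding eq by (rule card_Un_disjoint) (use dj insert.hyps cp_fin in auto)
  then show ?case using insert by simp
qed

lemma supp_edge:
  assumes "x \<in> VG" "y \<in> VG" "cl k x \<noteq> cl k y"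
  shows "supports VG V (take k SV) (drop k SV) {x,y}"
proof -
  have AV: "AA k \<subseteq> V" using AB_un by blast
  have BV: "z \<in> V \<Longrightarrow> z \<notin> AA k \<Longrightarrow> z \<in> BB k" for z using AB_un by blast
  show ?thesis
    unfolding supports_def
  proof (cases "cl k x = 0")
    case True
    then have xA: "x \<in> AA k" unfolding cl_def by (auto split: if_splits)
    show "\<exists>a b. {x, y} = {a, b} \<and> (a \<in> AA k \<and> b \<in> BB k \<or> a \<in> V \<and> b \<in> VG - V)"
    proof (cases "y \<in> V")
      case True
      then have "y \<in> BB k" using assms(3) xA BV unfolding cl_def by (auto split: if_splits)
      then show ?thesis using xA by blast
    next
      case False then show ?thesis using xA AV assms(2) by blast
    qed
  next
    case False
    show "\<exists>a b. {x, y} = {a, b} \<and> (a \<in> AA k \<and> b \<in> BB k \<or> a \<in> V \<and> b \<in> VG - V)"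
    proof (cases "cl k y = 0")
      case True
      then have yA: "y \<in> AA k" unfolding cl_def by (auto split: if_splits)
      show ?thesis
      proof (cases "x \<in> V")
        case True
        then have "x \<in> BB k" using False BV unfolding cl_def by (auto split: if_splits)
        then show ?thesis using yA by (metis insert_commute)
      next
        case F: False then show ?thesis using yA AV assms(1) by (metis Diff_iff insert_commute subsetD)
      qed
    next
      case F2: False
      then have "(x \<in> V \<and> y \<notin> V) \<or> (y \<in> V \<and> x \<notin> V)"
        using False assms(3) unfolding cl_def by (auto split: if_splits)
      then show ?thesis using assms(1,2) by (metis Diff_iff insert_commute)
    qed
  qed
qed

end



context LT begin

lemma pick:
  assumes "finite I" "card I \<ge> p"
    and "\<forall>i\<in>I. e i \<in> EG \<and> e i \<subseteq> Z \<and> supports VG V (take k SV) (drop k SV) (e i) \<and> e i \<noteq> {}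
           \<and> (\<forall>x\<in>e i. \<phi> x = i)"
  shows "\<exists>M. good k Z M \<and> card M = p"
proof -
  obtain I' where I': "I' \<subseteq> I" "card I' = p" using obtain_subset_with_card_n[OF assms(2)] by blast
  have inj: "inj_on e I'"
  proof (rule inj_onI)
    fix i j assume ij: "i \<in> I'" "j \<in> I'" "e i = e j"
    then obtain x where "x \<in> e i" using assms(3) I'(1) by blast
    then have "\<phi> x = i" "x \<in> e j" using ij assms(3) I'(1) by auto
    then have "\<phi> x = j" using ij(2) assms(3) I'(1) by blast
    then show "i = j" using \<open>\<phi> x = i\<close> by simp
  qed
  have fin: "finite I'" using I' assms(1) finite_subset by blast
  have "good k Z (e ` I')"
    unfolding good_def matching_def supported_by_def
  proof (intro conjI)
    show "finite (e ` I')" using fin by simp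
    show "e ` I' \<subseteq> EG" using assms(3) I'(1) by blast
    show "\<forall>x\<in>e ` I'. \<forall>y\<in>e ` I'. x \<noteq> y \<longrightarrow> x \<inter> y = {}"
    proof (intro ballI impI)
      fix x y assume xy: "x \<in> e ` I'" "y \<in> e ` I'" "x \<noteq> y"
      then obtain i j where "i \<in> I'" "j \<in> I'" "x = e i" "y = e j" by blast
      note ij = this
      have "i \<noteq> j" using ij xy(3) by auto
      show "x \<inter> y = {}"
      proof (rule ccontr)
        assume "x \<inter> y \<noteq> {}"
        then obtain z where "z \<in> e i" "z \<in> e j" using ij by blast
        then have "\<phi> z = i" "\<phi> z = j" using assms(3) I'(1) ij(1,2) by blast+
        then show False using \<open>i \<noteq> j\<close> by simp
      qed
    qed
    show "\<Union> (e ` I') \<subseteq> Z" using assms(3) I'(1) by blast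
    show "\<forall>x\<in>e ` I'. supports VG V (take k SV) (drop k SV) x" using assms(3) I'(1) by blast
  qed
  moreover have "card (e ` I') = p" using card_image[OF inj] I' by simp
  ultimately show ?thesis by blast
qed

lemma EG_copy: "v \<in> VT \<Longrightarrow> {a,b} \<in> EH \<Longrightarrow> {(v,a),(v,b)} \<in> EG"
  unfolding TH_edges_def by (rule UnI1, rule CollectI, rule exI[of _ v], rule exI[of _ a], rule exI[of _ b]) simp

lemma EG_layer: "{a,b} \<in> ET \<Longrightarrow> i \<in> {1..m} \<Longrightarrow> {(a,i),(b,i)} \<in> EG"
  unfolding TH_edges_def by (rule UnI2, rule CollectI, rule exI[of _ a], rule exI[of _ b], rule exI[of _ i]) simp

lemma Hedge:
  assumes "i \<in> {1..m}" "j \<in> {1..m}" "cl k (v,i) \<noteq> cl k (v,j)"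
  shows "\<exists>a b. {a,b} \<in> EH \<and> a \<in> {1..m} \<and> b \<in> {1..m} \<and> cl k (v,a) \<noteq> cl k (v,b)"
proof -
  have "(i,j) \<in> {(x,y). {x,y} \<in> EH}\<^sup>*" using Hconn assms(1,2) unfolding connected_graph_def by blast
  from rtrancl_diff[OF this, of "\<lambda>x. cl k (v,x)"] assms(3)
  obtain a b where ab: "{a,b} \<in> EH" "cl k (v,a) \<noteq> cl k (v,b)" by auto
  then obtain x y where "{a,b} = {x,y}" "x \<in> {1..m}" "y \<in> {1..m}"
    using Hconn unfolding connected_graph_def simple_graph_def by blast
  then have "a \<in> {1..m}" "b \<in> {1..m}" by (auto simp: doubleton_eq_iff)
  then show ?thesis using ab by blast
qed

lemma Tedge:
  assumes "conn S" "a \<in> S" "b \<in> S" "cl k (a,i) \<noteq> cl k (b,i)"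
  shows "\<exists>a' b'. a' \<in> S \<and> b' \<in> S \<and> {a',b'} \<in> ET \<and> cl k (a',i) \<noteq> cl k (b',i)"
proof -
  have "(a,b) \<in> (ES S)\<^sup>*" using assms unfolding conn_def by blast
  from rtrancl_diff[OF this, of "\<lambda>x. cl k (x,i)"] assms(4)
  show ?thesis unfolding ES_def by auto
qed

end


context LT begin
lemma lift:
  assumes S: "S \<subseteq> VT" "conn S" "card S \<ge> p" and u: "u \<in> S" "\<not> arich k u" and w: "w \<in> S" "\<not> brich k w"
  shows "\<exists>M. good k (S \<times> {1..m}) M \<and> card M = p"
proof -
  define L where "L = {i\<in>{1..m}. \<exists>a\<in>S. \<exists>b\<in>S. cl k (a,i) \<noteq> cl k (b,i)}"
  have Lfin: "finite L" unfolding L_def by simp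
  have Sfin: "finite S" using S(1) VT_fin finite_subset by blast
  show ?thesis
  proof (cases "card L \<ge> p")
    case True
    have "\<forall>i\<in>L. \<exists>e. e \<in> EG \<and> e \<subseteq> S \<times> {1..m} \<and> supports VG V (take k SV) (drop k SV) e \<and> e \<noteq> {}
           \<and> (\<forall>x\<in>e. snd x = i)"
    proof
      fix i assume "i \<in> L"
      then obtain a b where ab: "a \<in> S" "b \<in> S" "cl k (a,i) \<noteq> cl k (b,i)" "i \<in> {1..m}" unfolding L_def by blast
      then obtain a' b' where ab': "a' \<in> S" "b' \<in> S" "{a',b'} \<in> ET" "cl k (a',i) \<noteq> cl k (b',i)"
        using Tedge[OF S(2)] by blast
      have "(a',i) \<in> VG" "(b',i) \<in> VG" using ab' ab(4) S(1) unfolding TH_verts_def by auto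
      then have "supports VG V (take k SV) (drop k SV) {(a',i),(b',i)}" using supp_edge ab'(4) by blast
      moreover have "{(a',i),(b',i)} \<in> EG" using EG_layer ab'(3) ab(4) by blast
      ultimately show "\<exists>e. e \<in> EG \<and> e \<subseteq> S \<times> {1..m} \<and> supports VG V (take k SV) (drop k SV) e \<and> e \<noteq> {}
           \<and> (\<forall>x\<in>e. snd x = i)" using ab' ab(4) by (intro exI[of _ "{(a',i),(b',i)}"]) auto
    qed
    then have "\<exists>e. \<forall>i\<in>L. e i \<in> EG \<and> e i \<subseteq> S \<times> {1..m} \<and> supports VG V (take k SV) (drop k SV) (e i) \<and> e i \<noteq> {}
           \<and> (\<forall>x\<in>e i. snd x = i)" by (rule bchoice)
    then obtain e where "\<forall>i\<in>L. e i \<in> EG \<and> e i \<subseteq> S \<times> {1..m} \<and> supports VG V (take k SV) (drop k SV) (e i) \<and> e i \<noteq> {}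
           \<and> (\<forall>x\<in>e i. snd x = i)" by blast
    then show ?thesis using pick[OF Lfin True] by blast
  next
    case False
    have allnm: "\<forall>v\<in>S. \<exists>i\<in>{1..m}. \<exists>j\<in>{1..m}. cl k (v,i) \<noteq> cl k (v,j)"
    proof (rule ccontr)
      assume "\<not> ?thesis"
      then obtain v0 where v0: "v0 \<in> S" "\<forall>i\<in>{1..m}. \<forall>j\<in>{1..m}. cl k (v0,i) = cl k (v0,j)" by blast
      obtain i0 where i0: "(v0,i0) \<in> V" using OCa v0(1) S(1) by blast
      then have i0m: "i0 \<in> {1..m}" using Vsub by blast
      define X where "X = cl k (v0,i0)"
      have X2: "X \<noteq> 2" using i0 unfolding X_def cl_def by auto
      have outL: "\<And>a i. a \<in> S \<Longrightarrow> i \<in> {1..m} \<Longrightarrow> i \<notin> L \<Longrightarrow> cl k (a,i) = X"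
      proof -
        fix a i assume "a \<in> S" "i \<in> {1..m}" "i \<notin> L"
        then have "cl k (a,i) = cl k (v0,i)" using v0(1) unfolding L_def by blast
        also have "\<dots> = X" unfolding X_def using v0(2) \<open>i \<in> {1..m}\<close> i0m by blast
        finally show "cl k (a,i) = X" .
      qed
      have cLs: "card ({x} \<times> L) < p" for x :: 'b using False by (simp add: card_cartesian_product)
      show False
      proof (cases "X = 0")
        case True
        have "cp u - AA k \<subseteq> {u} \<times> L"
        proof
          fix y assume y: "y \<in> cp u - AA k"
          then obtain i where yi: "y = (u,i)" "i \<in> {1..m}" unfolding cp_def by blast
          show "y \<in> {u} \<times> L"
          proof (rule ccontr)
            assume "y \<notin> {u} \<times> L"
            then have "i \<notin> L" using yi by blast
            then have "cl k (u,i) = 0" using outL u(1) yi(2) True by simp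
            then have "(u,i) \<in> AA k" unfolding cl_def by (simp split: if_splits)
            then have "y \<in> AA k" using yi(1) by simp
            then show False using y by blast
          qed
        qed
        then have "card (cp u - AA k) \<le> card ({u} \<times> L)" by (rule card_mono[rotated]) (use Lfin in simp)
        then have "card (cp u - AA k) < p" using cLs[of u] by linarith
        then show False using u(2) unfolding arich_def by simp
      next
        case F0: False
        then have X1: "X = 1" using X2 unfolding X_def cl_def by (auto split: if_splits)
        have "cp w - BB k \<subseteq> {w} \<times> L"
        proof
          fix y assume y: "y \<in> cp w - BB k"
          then obtain i where yi: "y = (w,i)" "i \<in> {1..m}" unfolding cp_def by blast
          show "y \<in> {w} \<times> L"
          proof (rule ccontr)
            assume "y \<notin> {w} \<times> L"
            then have "i \<notin> L" using yi by blast
            then have "cl k (w,i) = 1" using outL w(1) yi(2) X1 by simp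
            then have "(w,i) \<notin> AA k \<and> (w,i) \<in> V" unfolding cl_def by (simp split: if_splits)
            then have "y \<in> BB k" using AB_un yi(1) by blast
            then show False using y by blast
          qed
        qed
        then have "card (cp w - BB k) \<le> card ({w} \<times> L)" by (rule card_mono[rotated]) (use Lfin in simp)
        then have "card (cp w - BB k) < p" using cLs[of w] by linarith
        then show False using w(2) unfolding brich_def by simp
      qed
    qed
    have "\<forall>v\<in>S. \<exists>e. e \<in> EG \<and> e \<subseteq> S \<times> {1..m} \<and> supports VG V (take k SV) (drop k SV) e \<and> e \<noteq> {}
           \<and> (\<forall>x\<in>e. fst x = v)"
    proof
      fix v assume v: "v \<in> S"
      then obtain i j where "i \<in> {1..m}" "j \<in> {1..m}" "cl k (v,i) \<noteq> cl k (v,j)" using allnm by blast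
      then obtain a b where ab: "{a,b} \<in> EH" "a \<in> {1..m}" "b \<in> {1..m}" "cl k (v,a) \<noteq> cl k (v,b)"
        using Hedge by blast
      have "(v,a) \<in> VG" "(v,b) \<in> VG" using ab v S(1) unfolding TH_verts_def by auto
      then have "supports VG V (take k SV) (drop k SV) {(v,a),(v,b)}" using supp_edge ab(4) by blast
      moreover have "{(v,a),(v,b)} \<in> EG" using EG_copy ab(1) v S(1) by blast
      ultimately show "\<exists>e. e \<in> EG \<and> e \<subseteq> S \<times> {1..m} \<and> supports VG V (take k SV) (drop k SV) e \<and> e \<noteq> {}
           \<and> (\<forall>x\<in>e. fst x = v)" using ab v by (intro exI[of _ "{(v,a),(v,b)}"]) auto
    qed
    then have "\<exists>e. \<forall>v\<in>S. e v \<in> EG \<and> e v \<subseteq> S \<times> {1..m} \<and> supports VG V (take k SV) (drop k SV) (e v) \<and> e v \<noteq> {}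
           \<and> (\<forall>x\<in>e v. fst x = v)" by (rule bchoice)
    then obtain e where "\<forall>v\<in>S. e v \<in> EG \<and> e v \<subseteq> S \<times> {1..m} \<and> supports VG V (take k SV) (drop k SV) (e v) \<and> e v \<noteq> {}
           \<and> (\<forall>x\<in>e v. fst x = v)" by blast
    then show ?thesis using pick[OF Sfin S(3)] by blast
  qed
qed

end


context LT begin

lemma ginj: "inj_on g (ctt_verts h)" using gbij by (rule bij_betw_imp_inj_on)
lemma gimg: "g ` ctt_verts h = VT" using gbij by (rule bij_betw_imp_surj_on)

lemma ES_sym: assumes "(x,y) \<in> ES S" shows "(y,x) \<in> ES S"
proof -
  have h: "x \<in> S" "y \<in> S" "{x,y} \<in> ET" using assms unfolding ES_def by auto
  have "{y,x} \<in> ET" using h(3) by (simp add: insert_commute)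
  then show ?thesis using h unfolding ES_def by blast
qed

lemma conn_root:
  assumes "r \<in> S" "\<forall>x\<in>S. (r,x) \<in> (ES S)\<^sup>*" shows "conn S"
proof -
  have conv: "(ES S)\<inverse> = ES S"
  proof (rule set_eqI)
    fix q :: "'b \<times> 'b"
    obtain a b where "q = (a,b)" by (cases q)
    then show "q \<in> (ES S)\<inverse> \<longleftrightarrow> q \<in> ES S" using ES_sym[of a b S] ES_sym[of b a S] by blast
  qed
  have "(x,r) \<in> (ES S)\<^sup>*" if "x \<in> S" for x
  proof -
    have "(r,x) \<in> (ES S)\<^sup>*" using assms that by blast
    then have "(x,r) \<in> ((ES S)\<inverse>)\<^sup>*" by (rule rtrancl_converseI)
    then show ?thesis using conv by simp
  qed
  note bk = this
  show ?thesis unfolding conn_def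
  proof (intro ballI)
    fix x y assume "x \<in> S" "y \<in> S"
    then have "(x,r) \<in> (ES S)\<^sup>*" "(r,y) \<in> (ES S)\<^sup>*" using bk assms(2) by blast+
    then show "(x,y) \<in> (ES S)\<^sup>*" by (rule rtrancl_trans)
  qed
qed

lemma ES_mono: "S \<subseteq> S' \<Longrightarrow> (x,y) \<in> (ES S)\<^sup>* \<Longrightarrow> (x,y) \<in> (ES S')\<^sup>*"
proof -
  assume "S \<subseteq> S'" "(x,y) \<in> (ES S)\<^sup>*"
  moreover have "ES S \<subseteq> ES S'" using \<open>S \<subseteq> S'\<close> unfolding ES_def by auto
  ultimately show ?thesis using rtrancl_mono by blast
qed

lemma sub_path:
  assumes "length w + j \<le> h" "set w \<subseteq> {0,1,2}" "g ` sub w j \<subseteq> S"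
  shows "z \<in> ctt_verts j \<Longrightarrow> (g w, g (w @ z)) \<in> (ES S)\<^sup>*"
proof (induction z rule: rev_induct)
  case Nil then show ?case by simp
next
  case (snoc c z)
  have z: "z \<in> ctt_verts j" "length z < j" "c \<in> {0,1,2}" using snoc.prems unfolding ctt_verts_def by auto
  have wz: "w @ z \<in> ctt_verts h" "length (w @ z) < h" using z assms(1,2) unfolding ctt_verts_def by auto
  have c3: "c < 3" using z(3) by auto
  have e: "{g (w@z), g ((w@z)@[c])} \<in> ET" by (rule gedge[OF wz c3])
  have in1: "w @ z \<in> sub w j" unfolding sub_def using z(1) by blast
  have in2: "w @ (z @ [c]) \<in> sub w j" unfolding sub_def using snoc.prems by blast
  have m1: "g (w@z) \<in> S" using in1 assms(3) by blast
  have m2: "g (w @ (z @ [c])) \<in> S" using in2 assms(3) by blast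
  have "(g (w@z), g (w @ (z @ [c]))) \<in> ES S" using e m1 m2 unfolding ES_def by simp
  with snoc.IH[OF z(1)] show ?case by (rule rtrancl_into_rtrancl)
qed

lemma conn_sub:
  assumes "length w + j \<le> h" "set w \<subseteq> {0,1,2}"
  shows "conn (g ` sub w j)"
proof (rule conn_root)
  show "g w \<in> g ` sub w j" using sub_root by blast
  show "\<forall>x\<in>g ` sub w j. (g w, x) \<in> (ES (g ` sub w j))\<^sup>*"
  proof
    fix x assume "x \<in> g ` sub w j"
    then obtain z where "z \<in> ctt_verts j" "x = g (w @ z)" unfolding sub_def by blast
    then show "(g w, x) \<in> (ES (g ` sub w j))\<^sup>*" using sub_path[OF assms order_refl] by simp
  qed
qed

lemma conn_R:
  assumes "length w + Suc j \<le> h" "set w \<subseteq> {0,1,2}" "a < 3" "c < 3"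
  shows "conn (g ` (insert w (sub (w@[a]) j \<union> sub (w@[c]) j)))" (is "conn ?R")
proof (rule conn_root)
  show "g w \<in> ?R" by blast
  have one: "(g w, x) \<in> (ES ?R)\<^sup>*" if b3: "b < 3" "b = a \<or> b = c" and x: "x \<in> g ` sub (w@[b]) j" for b x
  proof -
    have wc: "w \<in> ctt_verts h" "length w < h" using assms(1,2) unfolding ctt_verts_def by auto
    have e: "{g w, g (w@[b])} \<in> ET" by (rule gedge[OF wc b3(1)])
    have sb: "g ` sub (w@[b]) j \<subseteq> ?R" using b3(2) by blast
    have "w @ [b] \<in> sub (w@[b]) j" by (rule sub_root)
    then have m2: "g (w@[b]) \<in> ?R" using sb by blast
    have m1: "g w \<in> ?R" by blast
    have "(g w, g (w@[b])) \<in> ES ?R" using e m1 m2 unfolding ES_def by simp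
    moreover obtain z where "z \<in> ctt_verts j" "x = g ((w@[b]) @ z)" using x unfolding sub_def by blast
    moreover have "set (w@[b]) \<subseteq> {0,1,2}" using assms(2) b3(1) by auto
    ultimately show ?thesis
    proof -
      assume st: "(g w, g (w@[b])) \<in> ES ?R" and z: "z \<in> ctt_verts j" "x = g ((w@[b]) @ z)"
        and sw: "set (w@[b]) \<subseteq> {0,1,2}"
      have len: "length (w@[b]) + j \<le> h" using assms(1) by simp
      have "(g (w@[b]), g ((w@[b]) @ z)) \<in> (ES ?R)\<^sup>*" by (rule sub_path[OF len sw sb z(1)])
      with st have "(g w, g ((w@[b]) @ z)) \<in> (ES ?R)\<^sup>*" by (rule converse_rtrancl_into_rtrancl)
      then show ?thesis using z(2) by simp
    qed
  qed
  show "\<forall>x\<in>?R. (g w, x) \<in> (ES ?R)\<^sup>*"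
  proof
    fix x assume "x \<in> ?R"
    moreover have "?R = insert (g w) (g ` sub (w@[a]) j \<union> g ` sub (w@[c]) j)" by (simp add: image_Un)
    ultimately consider "x = g w" | "x \<in> g ` sub (w@[a]) j" | "x \<in> g ` sub (w@[c]) j" by (simp only: insert_iff Un_iff) blast
    then show "(g w, x) \<in> (ES ?R)\<^sup>*"
    proof cases
      case 1 then show ?thesis by simp
    next
      case 2 then show ?thesis using one[of a x] assms(3) by blast
    next
      case 3 then show ?thesis using one[of c x] assms(4) by blast
    qed
  qed
qed

lemma card_gsub:
  assumes "length w + j \<le> h" "set w \<subseteq> {0,1,2}"
  shows "card (g ` sub w j) = NN j"
proof -
  have "inj_on g (sub w j)" using ginj sub_ctt[OF assms] inj_on_subset by blast
  then have "card (g ` sub w j) = card (sub w j)" by (rule card_image)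
  then show ?thesis using card_sub by simp
qed

lemma gsub_VT: "length w + j \<le> h \<Longrightarrow> set w \<subseteq> {0,1,2} \<Longrightarrow> g ` sub w j \<subseteq> VT"
  using sub_ctt gimg by blast

end


context LT begin

lemma EG_ne: "e \<in> EG \<Longrightarrow> e \<noteq> {}"
  unfolding TH_edges_def by auto

lemma good_union:
  assumes g1: "good k Z1 M1" and g2: "good k Z2 M2" and dj: "Z1 \<inter> Z2 = {}"
  shows "good k (Z1 \<union> Z2) (M1 \<union> M2) \<and> card (M1 \<union> M2) = card M1 + card M2"
proof -
  have f1: "finite M1" "M1 \<subseteq> EG" "\<Union>M1 \<subseteq> Z1" "\<forall>e\<in>M1. \<forall>e'\<in>M1. e \<noteq> e' \<longrightarrow> e \<inter> e' = {}"
    "\<forall>e\<in>M1. supports VG V (take k SV) (drop k SV) e"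
    using g1 unfolding good_def matching_def supported_by_def by blast+
  have f2: "finite M2" "M2 \<subseteq> EG" "\<Union>M2 \<subseteq> Z2" "\<forall>e\<in>M2. \<forall>e'\<in>M2. e \<noteq> e' \<longrightarrow> e \<inter> e' = {}"
    "\<forall>e\<in>M2. supports VG V (take k SV) (drop k SV) e"
    using g2 unfolding good_def matching_def supported_by_def by blast+
  have cross: "e \<inter> e' = {}" if "e \<in> M1" "e' \<in> M2" for e e'
  proof -
    have "e \<subseteq> Z1" "e' \<subseteq> Z2" using that f1(3) f2(3) by blast+
    then show ?thesis using dj by blast
  qed
  have d: "M1 \<inter> M2 = {}"
  proof (rule ccontr)
    assume "M1 \<inter> M2 \<noteq> {}"
    then obtain e where e: "e \<in> M1" "e \<in> M2" by blast
    then have "e = {}" using cross[OF e] by simp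
    moreover have "e \<noteq> {}" using EG_ne e(1) f1(2) by blast
    ultimately show False by simp
  qed
  have "matching EG (M1 \<union> M2)"
    unfolding matching_def
  proof (intro conjI ballI impI)
    show "M1 \<union> M2 \<subseteq> EG" using f1(2) f2(2) by blast
    fix e e' assume "e \<in> M1 \<union> M2" "e' \<in> M1 \<union> M2" "e \<noteq> e'"
    then show "e \<inter> e' = {}" using f1(4) f2(4) cross by (metis Int_commute Un_iff)
  qed
  moreover have "\<Union>(M1 \<union> M2) \<subseteq> Z1 \<union> Z2" using f1(3) f2(3) by blast
  moreover have "supported_by VG V (take k SV) (drop k SV) (M1 \<union> M2)"
    unfolding supported_by_def using f1(5) f2(5) by blast
  moreover have "card (M1 \<union> M2) = card M1 + card M2" by (rule card_Un_disjoint[OF f1(1) f2(1) d])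
  ultimately show ?thesis unfolding good_def using f1(1) f2(1) by blast
qed

lemma good_mono: "good k Z M \<Longrightarrow> Z \<subseteq> Z' \<Longrightarrow> good k Z' M"
  unfolding good_def by blast

lemma sAB_mono:
  assumes "Q \<subseteq> Q'" "Q' \<subseteq> VT"
  shows "sA Q k \<le> sA Q' k" "sB Q k \<le> sB Q' k"
proof -
  have fin: "finite (Q' \<times> {1..m})" using assms(2) VT_fin finite_subset by blast
  have s: "Q \<times> {1..m} \<subseteq> Q' \<times> {1..m}" using assms(1) by blast
  show "sA Q k \<le> sA Q' k" unfolding sA_def by (rule card_mono) (use fin s in blast)+
  show "sB Q k \<le> sB Q' k" unfolding sB_def by (rule card_mono) (use fin s in blast)+
qed

lemma Inv_mono: "Q \<subseteq> Q' \<Longrightarrow> Q' \<subseteq> VT \<Longrightarrow> Inv Q k \<Longrightarrow> Inv Q' k"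
  unfolding Inv_def using sAB_mono[of Q Q' k] by (meson le_trans subsetD)

lemma sA_sB_cover:
  assumes "Q \<subseteq> VT" shows "card Q * m \<le> sA Q k + sB Q k"
proof -
  have fin: "finite (Q \<times> {1..m})" using assms VT_fin finite_subset by blast
  have "Q \<times> {1..m} \<subseteq> (Q \<times> {1..m} - BB k) \<union> (Q \<times> {1..m} - AA k)" using AB_disj by blast
  then have "card (Q \<times> {1..m}) \<le> card ((Q \<times> {1..m} - BB k) \<union> (Q \<times> {1..m} - AA k))"
    by (rule card_mono[rotated]) (use fin in simp)
  also have "\<dots> \<le> sA Q k + sB Q k" unfolding sA_def sB_def by (rule card_Un_le)
  finally show ?thesis by (simp add: card_cartesian_product)
qed

end


context LT begin

lemma base_inv:
  assumes QV: "Q \<subseteq> VT" and cQ: "card Q \<ge> p + 1"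
  shows "\<exists>k\<le>length SV. Inv Q k"
proof -
  have Qfin: "finite Q" using QV VT_fin finite_subset by blast
  have cQm: "card (Q \<times> {1..m}) = card Q * m" by (simp add: card_cartesian_product)
  have "card Q * m \<ge> (p+1) * (2*p)" using cQ m2p by (rule mult_le_mono)
  moreover have "(p+1) * (2*p) = 2*p^2 + 2*p" by (simp add: power2_eq_square algebra_simps)
  ultimately have big: "card Q * m \<ge> 2*p^2 + 2*p" by simp
  have Qne: "Q \<noteq> {}" using cQ by auto
  define P where "P k \<longleftrightarrow> k \<le> length SV \<and> (\<exists>u\<in>Q. \<not> arich k u) \<and> sB Q k \<ge> p^2" for k
  have P0: "P 0"
  proof -
    have "\<not> arich 0 u" for u unfolding arich_def using card_cp[of u] m2p by simp
    moreover have "sB Q 0 = card Q * m" unfolding sB_def by (simp add: card_cartesian_product)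
    ultimately show ?thesis unfolding P_def using Qne big by auto
  qed
  have bd: "\<forall>y. P y \<longrightarrow> y \<le> length SV" unfolding P_def by blast
  define k0 where "k0 = (GREATEST k. P k)"
  have Pk0: "P k0" unfolding k0_def by (rule GreatestI_nat[where P=P, OF P0]) (use bd in blast)
  have mx: "\<not> P (Suc k0)"
  proof
    assume "P (Suc k0)"
    then have "Suc k0 \<le> k0" unfolding k0_def by (rule Greatest_le_nat[where P=P]) (use bd in blast)
    then show False by simp
  qed
  have k0l: "k0 \<le> length SV" using Pk0 unfolding P_def by blast
  have na: "\<exists>u\<in>Q. \<not> arich k0 u" and sB0: "sB Q k0 \<ge> p^2" using Pk0 unfolding P_def by blast+
  show ?thesis
  proof (cases "k0 = length SV")
    case True
    then have B0: "BB k0 = {}" by simp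
    have "\<not> brich k0 u" for u unfolding brich_def B0 using card_cp[of u] m2p by simp
    moreover have "sA Q k0 = card Q * m" unfolding sA_def B0 by (simp add: card_cartesian_product)
    ultimately have "(\<exists>u\<in>Q. \<not> brich k0 u)" "sA Q k0 \<ge> p^2" using Qne big by auto
    then show ?thesis unfolding Inv_def using na sB0 k0l by blast
  next
    case False
    then have lt: "k0 < length SV" using k0l by simp
    define x where "x = SV ! k0"
    have Asuc: "AA (Suc k0) = insert x (AA k0)"
      unfolding x_def using take_Suc_conv_app_nth[OF lt] by simp
    have cov: "card Q * m \<le> sA Q k0 + sB Q k0" by (rule sA_sB_cover[OF QV])
    have nP: "\<not> ((\<exists>u\<in>Q. \<not> arich (Suc k0) u) \<and> sB Q (Suc k0) \<ge> p^2)"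
      using mx lt unfolding P_def by simp
    show ?thesis
    proof (cases "sB Q (Suc k0) < p^2")
      case True
      have "Q \<times> {1..m} - AA k0 \<subseteq> insert x (Q \<times> {1..m} - AA (Suc k0))" unfolding Asuc by blast
      then have "sB Q k0 \<le> card (insert x (Q \<times> {1..m} - AA (Suc k0)))"
        unfolding sB_def by (rule card_mono[rotated]) (use Qfin in simp)
      also have "\<dots> \<le> sB Q (Suc k0) + 1" unfolding sB_def using card_insert_le_m1
        by (metis Suc_eq_plus1 card_insert_if finite_Diff finite_SigmaI finite_atLeastAtMost Qfin le_refl le_SucI)
      finally have sBle: "sB Q k0 \<le> p^2" using True by simp
      have sAge: "sA Q k0 \<ge> p^2" using cov big sBle by linarith
      have nb: "\<exists>u\<in>Q. \<not> brich k0 u"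
      proof (rule ccontr)
        assume "\<not> ?thesis"
        then have allb: "\<forall>u\<in>Q. brich k0 u" by blast
        have "\<forall>u\<in>Q. card (cp u - AA k0) \<ge> p + 1"
        proof
          fix u assume "u \<in> Q"
          then have "card (cp u - BB k0) < p" using allb unfolding brich_def by blast
          then show "card (cp u - AA k0) \<ge> p + 1" using cover[of u k0] m2p by linarith
        qed
        then have "card (Q \<times> {1..m} - AA k0) \<ge> card Q * (p+1)" by (rule sum_lb[OF Qfin])
        moreover have "card Q * (p+1) \<ge> (p+1)*(p+1)" by (rule mult_le_mono1[OF cQ])
        moreover have "(p+1)*(p+1) > p^2" by (simp add: power2_eq_square)
        ultimately show False using sBle unfolding sB_def by linarith
      qed
      show ?thesis unfolding Inv_def using na nb sAge sB0 k0l by blast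
    next
      case False
      then have allA: "\<forall>u\<in>Q. arich (Suc k0) u" using nP by auto
      define Q' where "Q' = Q - {fst x}"
      have Q'sub: "Q' \<subseteq> Q" unfolding Q'_def by blast
      have Q'fin: "finite Q'" using Qfin Q'sub finite_subset by blast
      have cQ': "card Q' \<ge> p" unfolding Q'_def using cQ card_Diff_singleton_if[of Q "fst x"] by auto
      have arQ': "arich k0 u" if "u \<in> Q'" for u
      proof -
        have "x \<notin> cp u" using that unfolding Q'_def cp_def by auto
        then have "cp u - AA k0 = cp u - AA (Suc k0)" unfolding Asuc by blast
        then show ?thesis using allA that Q'sub unfolding arich_def by auto
      qed
      have "Q' \<noteq> {}" using cQ' p1 by auto
      then obtain u0 where "u0 \<in> Q'" by blast
      then have nb: "\<exists>u\<in>Q. \<not> brich k0 u" using arQ' not_both Q'sub by blast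
      have "\<forall>u\<in>Q'. card (cp u - BB k0) \<ge> p"
      proof
        fix u assume "u \<in> Q'"
        then have "card (cp u - AA k0) < p" using arQ' unfolding arich_def by blast
        then show "card (cp u - BB k0) \<ge> p" using cover[of u k0] m2p by linarith
      qed
      then have "card (Q' \<times> {1..m} - BB k0) \<ge> card Q' * p" by (rule sum_lb[OF Q'fin])
      moreover have "card Q' * p \<ge> p * p" by (rule mult_le_mono1[OF cQ'])
      moreover have "sA Q' k0 \<le> sA Q k0" by (rule sAB_mono(1)[OF Q'sub QV])
      ultimately have "sA Q k0 \<ge> p^2" unfolding sA_def power2_eq_square by linarith
      then show ?thesis unfolding Inv_def using na nb sB0 k0l by blast
    qed
  qed
qed

end


context LT begin

lemma claim:
  assumes t: "NN t \<le> p" "p < NN (Suc t)"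
  shows "length w + (Suc t + d) = h \<Longrightarrow> set w \<subseteq> {0,1,2} \<Longrightarrow>
    \<exists>k M. k \<le> length SV \<and> good k (g ` sub w (Suc t + d) \<times> {1..m}) M \<and> card M \<ge> p * Suc d
      \<and> Inv (g ` sub w (Suc t + d)) k"
proof (induction d arbitrary: w)
  case 0
  let ?Q = "g ` sub w (Suc t)"
  have le: "length w + Suc t \<le> h" using 0 by simp
  have QV: "?Q \<subseteq> VT" by (rule gsub_VT[OF le 0(2)])
  have cQ: "card ?Q = NN (Suc t)" by (rule card_gsub[OF le 0(2)])
  obtain k where k: "k \<le> length SV" "Inv ?Q k" using base_inv[OF QV] cQ t(2) by auto
  obtain u w' where uw: "u \<in> ?Q" "\<not> arich k u" "w' \<in> ?Q" "\<not> brich k w'" using k(2) unfolding Inv_def by blast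
  have "card ?Q \<ge> p" using cQ t(2) by simp
  then obtain M where M: "good k (?Q \<times> {1..m}) M" "card M = p"
    using lift[OF QV conn_sub[OF le 0(2)] _ uw] by blast
  show ?case using k M by auto
next
  case (Suc d)
  define j where "j = Suc t + d"
  have jeq: "Suc t + Suc d = Suc j" unfolding j_def by simp
  have len: "length w + Suc j = h" using Suc.prems jeq by simp
  have sw: "set w \<subseteq> {0,1,2}" using Suc.prems by simp
  have IHc: "\<exists>k M. k \<le> length SV \<and> good k (g ` sub (w@[c]) j \<times> {1..m}) M \<and> card M \<ge> p * Suc d
      \<and> Inv (g ` sub (w@[c]) j) k" if "c < 3" for c
  proof -
    have "length (w@[c]) + (Suc t + d) = h" using len unfolding j_def by simp
    moreover have "set (w@[c]) \<subseteq> {0,1,2}" using sw that by auto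
    ultimately show ?thesis using Suc.IH unfolding j_def by blast
  qed
  have "\<forall>c. \<exists>k. c < 3 \<longrightarrow> (\<exists>M. k \<le> length SV \<and> good k (g ` sub (w@[c]) j \<times> {1..m}) M \<and> card M \<ge> p * Suc d
      \<and> Inv (g ` sub (w@[c]) j) k)" using IHc by blast
  then obtain K where K: "\<forall>c. c < 3 \<longrightarrow> (\<exists>M. K c \<le> length SV \<and> good (K c) (g ` sub (w@[c]) j \<times> {1..m}) M \<and> card M \<ge> p * Suc d
      \<and> Inv (g ` sub (w@[c]) j) (K c))" using choice[of "\<lambda>c k. c < 3 \<longrightarrow> (\<exists>M. k \<le> length SV \<and> good k (g ` sub (w@[c]) j \<times> {1..m}) M \<and> card M \<ge> p * Suc d
      \<and> Inv (g ` sub (w@[c]) j) k)"] by blast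
  obtain a b c where abc: "a < 3" "b < 3" "c < 3" "a \<noteq> b" "a \<noteq> c" "b \<noteq> c" "K a \<le> K b" "K b \<le> K c"
    using three_order[of K] by blast
  obtain Mb where Mb: "K b \<le> length SV" "good (K b) (g ` sub (w@[b]) j \<times> {1..m}) Mb" "card Mb \<ge> p * Suc d"
      "Inv (g ` sub (w@[b]) j) (K b)" using K abc(2) by blast
  have Ia: "Inv (g ` sub (w@[a]) j) (K a)" using K abc(1) by blast
  have Ic: "Inv (g ` sub (w@[c]) j) (K c)" using K abc(3) by blast
  let ?k = "K b"
  let ?R = "g ` (insert w (sub (w@[a]) j \<union> sub (w@[c]) j))"
  let ?Qb = "g ` sub (w@[b]) j"
  let ?Qw = "g ` sub w (Suc j)"
  have lenc: "length (w@[x]) + j \<le> h" for x using len by simp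
  have swc: "x < 3 \<Longrightarrow> set (w@[x]) \<subseteq> {0,1,2}" for x using sw by auto
  have wct: "w \<in> ctt_verts h" using len sw unfolding ctt_verts_def by auto
  have subW: "sub (w@[x]) j \<subseteq> ctt_verts h" if "x < 3" for x by (rule sub_ctt[OF lenc swc[OF that]])
  have Rw: "insert w (sub (w@[a]) j \<union> sub (w@[c]) j) \<subseteq> ctt_verts h" using wct subW abc by blast
  have RV: "?R \<subseteq> VT" using Rw gimg by blast
  have connR: "conn ?R" by (rule conn_R[OF _ sw abc(1) abc(3)]) (use len in simp)
  have cRa: "card (g ` sub (w@[a]) j) = NN j" by (rule card_gsub[OF lenc swc[OF abc(1)]])
  have "NN (Suc t) \<le> NN j" unfolding j_def NN_le_iff by simp
  then have "card (g ` sub (w@[a]) j) \<ge> p" using cRa t(2) by simp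
  moreover have "card (g ` sub (w@[a]) j) \<le> card ?R"
    by (rule card_mono) (use RV VT_fin finite_subset in blast)+
  ultimately have cR: "card ?R \<ge> p" by simp
  obtain u where u: "u \<in> g ` sub (w@[c]) j" "\<not> arich (K c) u" using Ic unfolding Inv_def by blast
  have u': "u \<in> ?R" "\<not> arich ?k u" using u arich_mono[OF abc(8)] by blast+
  obtain v where v: "v \<in> g ` sub (w@[a]) j" "\<not> brich (K a) v" using Ia unfolding Inv_def by blast
  have v': "v \<in> ?R" "\<not> brich ?k v" using v brich_mono[OF abc(7)] by blast+
  obtain MR where MR: "good ?k (?R \<times> {1..m}) MR" "card MR = p"
    using lift[OF RV connR cR u' v'] by blast
  have dw: "sub (w@[b]) j \<inter> insert w (sub (w@[a]) j \<union> sub (w@[c]) j) = {}"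
    using sub_disj[of b a w j] sub_disj[of b c w j] sub_root_notin[of w b j] abc by blast
  have "?Qb \<inter> ?R = g ` (sub (w@[b]) j \<inter> insert w (sub (w@[a]) j \<union> sub (w@[c]) j))"
    by (rule inj_on_image_Int[OF ginj subW[OF abc(2)] Rw, symmetric])
  then have dQ: "?Qb \<inter> ?R = {}" using dw by simp
  have dZ: "(?Qb \<times> {1..m}) \<inter> (?R \<times> {1..m}) = {}" using dQ by blast
  have U: "good ?k (?Qb \<times> {1..m} \<union> ?R \<times> {1..m}) (Mb \<union> MR) \<and> card (Mb \<union> MR) = card Mb + card MR"
    by (rule good_union[OF Mb(2) MR(1) dZ])
  have QbW: "?Qb \<subseteq> ?Qw" using sub_child[OF abc(2)] by blast
  have RW: "?R \<subseteq> ?Qw" using sub_child[OF abc(1)] sub_child[OF abc(3)] sub_root[of w "Suc j"] by blast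
  have QwV: "?Qw \<subseteq> VT" by (rule gsub_VT) (use len sw in simp)+
  have G: "good ?k (?Qw \<times> {1..m}) (Mb \<union> MR)"
    by (rule good_mono[OF U[THEN conjunct1]]) (use QbW RW in blast)
  have C: "card (Mb \<union> MR) \<ge> p * Suc (Suc d)" using U Mb(3) MR(2) by simp
  have I: "Inv ?Qw ?k" by (rule Inv_mono[OF QbW QwV Mb(4)])
  show ?case unfolding jeq using Mb(1) G C I by blast
qed

end



theorem lemma3:
  fixes p m :: nat and EH :: "nat set set"
    and VT :: "'b set" and ET :: "'b set set"
    and V :: "('b \<times> nat) set" and SV :: "('b \<times> nat) list"
  assumes "p \<ge> 1"
    and "connected_graph {1..m} EH" and "m \<ge> 2 * p"
    and "complete_ternary_tree VT ET" and "card VT \<ge> p"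
    and "V \<subseteq> TH_verts VT m" and "OC VT V = VT"
    and "is_ordering SV V"
  shows "\<exists>M k. witnessing (TH_verts VT m) (TH_edges VT ET EH m) V SV M
           \<and> card M \<ge> p * (tr (real (card VT)) - tr (real p))
           \<and> k \<le> length SV
           \<and> supported_by (TH_verts VT m) V (take k SV) (drop k SV) M
           \<and> card (TH_verts VT m) \<ge> length (take k SV) + p ^ 2
           \<and> card (TH_verts VT m) \<ge> length (drop k SV) + p ^ 2"
proof -
  obtain h f where fb: "bij_betw f VT (ctt_verts h)"
    and fe: "\<forall>u\<in>VT. \<forall>v\<in>VT. {u, v} \<in> ET \<longleftrightarrow> {f u, f v} \<in> ctt_edges h"
    using assms(4) unfolding complete_ternary_tree_def by blast
  define g where "g = inv_into VT f"
  have gbij: "bij_betw g (ctt_verts h) VT" unfolding g_def by (rule bij_betw_inv_into[OF fb])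
  have fimg: "f ` VT = ctt_verts h" using fb by (rule bij_betw_imp_surj_on)
  have gedge: "{g x, g (x@[c])} \<in> ET" if x: "x \<in> ctt_verts h" "length x < h" "c < 3" for x c
  proof -
    have xc: "x @ [c] \<in> ctt_verts h" using x unfolding ctt_verts_def by auto
    have gx: "g x \<in> VT" "g (x@[c]) \<in> VT" using x(1) xc gbij by (simp_all add: bij_betw_apply)
    have fg: "f (g x) = x" "f (g (x@[c])) = x @ [c]" unfolding g_def
      using x(1) xc fimg by (simp_all add: f_inv_into_f)
    have "{x, x @ [c]} \<in> ctt_edges h" unfolding ctt_edges_def using x by blast
    then show ?thesis using fe gx fg by simp
  qed
  have OCa: "\<exists>i. (u,i) \<in> V" if "u \<in> VT" for u
  proof -
    have "u \<in> OC VT V" using assms(7) that by simp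
    then show ?thesis unfolding OC_def by blast
  qed
  have Vsub: "V \<subseteq> VT \<times> {1..m}" using assms(6) unfolding TH_verts_def .
  have dSV: "distinct SV" and sSV: "set SV = V" using assms(8) unfolding is_ordering_def by blast+
  interpret L: LT p m EH VT ET V SV h g
    by (unfold_locales) (use assms(1,2,3) gbij gedge Vsub OCa dSV sSV in auto)
  have cVT: "card VT = NN h" unfolding NN_def using bij_betw_same_card[OF fb] .
  obtain t where t: "NN t \<le> p" "p < NN (Suc t)" using tr_exists assms(1) by blast
  have trp: "tr (real p) = t" by (rule tr_eq[OF t])
  have trh: "tr (real (card VT)) = h" unfolding cVT by (rule tr_eq) (simp_all add: NN_Suc)
  have "NN t \<le> NN h" using t(1) assms(5) cVT by simp
  then have th: "t \<le> h" using NN_le_iff by blast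
  have cVG: "card (TH_verts VT m) = card VT * m" unfolding TH_verts_def by (simp add: card_cartesian_product)
  have big: "card (TH_verts VT m) \<ge> 2 * p^2"
  proof -
    have "card VT * m \<ge> p * (2*p)" using assms(5) assms(3) by (rule mult_le_mono)
    then show ?thesis using cVG by (simp add: power2_eq_square algebra_simps)
  qed
  have VG_fin: "finite (TH_verts VT m)" by (rule L.VG_fin)
  have VVG: "V \<subseteq> TH_verts VT m" by (rule assms(6))
  have lenSV: "length SV \<le> card (TH_verts VT m)"
    using distinct_card[OF dSV] sSV card_mono[OF VG_fin VVG] by simp
  show ?thesis
  proof (cases "t = h")
    case True
    define k where "k = min (length SV) (card (TH_verts VT m) - p^2)"
    have w: "witnessing (TH_verts VT m) (TH_edges VT ET EH m) V SV {}"
      unfolding witnessing_def matching_def supported_by_def by auto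
    have "k \<le> length SV" unfolding k_def by simp
    moreover have "card (TH_verts VT m) \<ge> length (take k SV) + p ^ 2" unfolding k_def using big by auto
    moreover have "card (TH_verts VT m) \<ge> length (drop k SV) + p ^ 2" unfolding k_def using big lenSV by auto
    moreover have "supported_by (TH_verts VT m) V (take k SV) (drop k SV) {}" unfolding supported_by_def by simp
    ultimately show ?thesis using w True trp trh by (intro exI[of _ "{}"] exI[of _ k]) simp
  next
    case False
    then have tlt: "t < h" using th by simp
    define d where "d = h - Suc t"
    have hd: "Suc t + d = h" unfolding d_def using tlt by simp
    have sub0: "sub [] h = ctt_verts h" unfolding sub_def by simp
    have gV: "g ` ctt_verts h = VT" by (rule L.gimg)
    have "\<exists>k M. k \<le> length SV \<and> L.good k (g ` sub [] (Suc t + d) \<times> {1..m}) M \<and> card M \<ge> p * Suc d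
      \<and> L.Inv (g ` sub [] (Suc t + d)) k" by (rule L.claim[OF t]) (use hd in simp_all)
    then obtain k M where kM: "k \<le> length SV" "L.good k (VT \<times> {1..m}) M" "card M \<ge> p * Suc d" "L.Inv VT k"
      unfolding hd sub0 gV by blast
    have gd: "matching (TH_edges VT ET EH m) M" "supported_by (TH_verts VT m) V (take k SV) (drop k SV) M"
      using kM(2) unfolding L.good_def by blast+
    have "h - t = Suc d" using hd by simp
    then have "p * Suc d = p * (tr (real (card VT)) - tr (real p))" using trp trh by simp
    then have cM: "card M \<ge> p * (tr (real (card VT)) - tr (real p))" using kM(3) by simp
    have i4: "(\<exists>u\<in>VT. \<not> L.arich k u) \<and> (\<exists>u\<in>VT. \<not> L.brich k u) \<and> L.sA VT k \<ge> p^2 \<and> L.sB VT k \<ge> p^2"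
      using kM(4) unfolding L.Inv_def .
    have sB: "L.sB VT k \<ge> p^2" using i4 by (elim conjE)
    have sA: "L.sA VT k \<ge> p^2" using i4 by (elim conjE)
    have "set (take k SV) \<subseteq> V" using set_take_subset[of k SV] sSV by simp
    then have At: "set (take k SV) \<subseteq> TH_verts VT m" using VVG by (rule order_trans)
    have "set (drop k SV) \<subseteq> V" using set_drop_subset[of k SV] sSV by simp
    then have Bt: "set (drop k SV) \<subseteq> TH_verts VT m" using VVG by (rule order_trans)
    have cA: "card (set (take k SV)) = length (take k SV)" by (rule distinct_card) (simp add: dSV)
    have cB: "card (set (drop k SV)) = length (drop k SV)" by (rule distinct_card) (simp add: dSV)
    have VGeq: "TH_verts VT m = VT \<times> {1..m}" by (simp add: TH_verts_def)
    have "L.sB VT k = card (TH_verts VT m - set (take k SV))" unfolding L.sB_def VGeq ..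
    also have "\<dots> = card (TH_verts VT m) - card (set (take k SV))"
      by (rule card_Diff_subset[OF finite_subset[OF At VG_fin] At])
    finally have e1: "L.sB VT k = card (TH_verts VT m) - length (take k SV)" using cA by simp
    have "L.sA VT k = card (TH_verts VT m - set (drop k SV))" unfolding L.sA_def VGeq ..
    also have "\<dots> = card (TH_verts VT m) - card (set (drop k SV))"
      by (rule card_Diff_subset[OF finite_subset[OF Bt VG_fin] Bt])
    finally have e2: "L.sA VT k = card (TH_verts VT m) - length (drop k SV)" using cB by simp
    have le1: "length (take k SV) \<le> card (TH_verts VT m)" using card_mono[OF VG_fin At] cA by simp
    have le2: "length (drop k SV) \<le> card (TH_verts VT m)" using card_mono[OF VG_fin Bt] cB by simp
    have b1: "card (TH_verts VT m) \<ge> length (take k SV) + p ^ 2" using sB e1 le1 by simp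
    have b2: "card (TH_verts VT m) \<ge> length (drop k SV) + p ^ 2" using sA e2 le2 by simp
    have w: "witnessing (TH_verts VT m) (TH_edges VT ET EH m) V SV M"
      unfolding witnessing_def using gd kM(1) by blast
    show ?thesis using w cM kM(1) gd(2) b1 b2 by (intro exI[of _ M] exI[of _ k]) simp
  qed
qed


end
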